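(* Let $K$ be a field of characteristic $0$ and let $(A_i,\omega_i)$, $i=1,2$, be baric $K$-algebras of countable dimension, with $\nu_i=\dim_K A_i$. Then $A_1\bowtie A_2$ is associative if and only if $(A_i,\omega_i)\cong(K^{\bowtie\nu_i},\operatorname{id}_K^{\bowtie\nu_i})$ for $i=1,2$. In that case $(A_1\bowtie A_2,\omega_1\bowtie\omega_2)\cong(K^{\bowtie\nu},\operatorname{id}_K^{\bowtie\nu})$ with $\nu=\nu_1+\nu_2$.
   Context: A baric algebra over a field $K$ is a pair $(A,\omega)$ where $A$ is a (not necessarily associative) $K$-algebra and $\omega:A\to K$ is a nonzero $K$-algebra homomorphism; two baric algebras $(A,\omega),(B,\varphi)$ are isomorphic if there is an algebra isomorphism $f:A\to B$ with $\varphi\circ f=\omega$. For baric algebras $(A_1,\omega_1),(A_2,\omega_2)$, $A_1\bowtie A_2$ is the vector space $A_1\oplus A_2$ with product $(a_1,a_2)(b_1,b_2)=(a_1b_1+\omega_2(b_2)a_1,\ a_2b_2+\omega_1(b_1)a_2)$ and weight $\omega_1\bowtie\omega_2(a_1,a_2)=\omega_1(a_1)+\omega_2(a_2)$. For a cardinal $1\le\nu\le\aleph_0$, $K^{\bowtie\nu}$ is the $K$-vector space of finitely supported families $(\alpha_i)_{i<\nu}$ in $K$ with product $(\alpha_i)(\beta_i)=\big(\sum_i\beta_i\big)(\alpha_i)$ and weight $\operatorname{id}_K^{\bowtie\nu}((\alpha_i))=\sum_i\alpha_i$ (for finite $\nu$ this is the iterated $\bowtie$-construction of $\nu$ copies of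 $(K,\operatorname{id}_K)$). *)

theory Defs
  imports Main "HOL-Library.Extended_Nat" "HOL-Library.Countable_Set" "HOL-Library.Product_Plus"
begin

definition baric_algebra ::
  "('k::field \<Rightarrow> 'a::ab_group_add \<Rightarrow> 'a) \<Rightarrow> ('a \<Rightarrow> 'a \<Rightarrow> 'a) \<Rightarrow> ('a \<Rightarrow> 'k) \<Rightarrow> bool" where
  "baric_algebra s m w \<longleftrightarrow>
     vector_space s \<and>
     (\<forall>x. Vector_Spaces.linear s s (m x)) \<and>
     (\<forall>y. Vector_Spaces.linear s s (\<lambda>x. m x y)) \<and>
     Vector_Spaces.linear s (*) w \<and>
     (\<forall>x y. w (m x y) = w x * w y) \<and>
     w \<noteq> (\<lambda>_. 0)"

text \<open>The vector space (with scalar multiplication s) has dimension \<nu>, where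
\<nu> = \<infinity> stands for the countably infinite dimension aleph_0.\<close>
definition has_dim :: "('k::field \<Rightarrow> 'a::ab_group_add \<Rightarrow> 'a) \<Rightarrow> enat \<Rightarrow> bool" where
  "has_dim s \<nu> \<longleftrightarrow>
     (\<exists>B. \<not> module.dependent s B \<and> module.span s B = UNIV \<and>
          ((finite B \<and> \<nu> = enat (card B)) \<or> (infinite B \<and> countable B \<and> \<nu> = \<infinity>)))"

definition countable_dim :: "('k::field \<Rightarrow> 'a::ab_group_add \<Rightarrow> 'a) \<Rightarrow> bool" where
  "countable_dim s \<longleftrightarrow>
     (\<exists>B. \<not> module.dependent s B \<and> module.span s B = UNIV \<and> countable B)"

definition associative :: "('a \<Rightarrow> 'a \<Rightarrow> 'a) \<Rightarrow> bool" where
  "associative m \<longleftrightarrow> (\<forall>x y z. m (m x y) z = m x (m y z))"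

definition bowtie_scale ::
  "('k \<Rightarrow> 'a \<Rightarrow> 'a) \<Rightarrow> ('k \<Rightarrow> 'b \<Rightarrow> 'b) \<Rightarrow> 'k \<Rightarrow> 'a \<times> 'b \<Rightarrow> 'a \<times> 'b" where
  "bowtie_scale s1 s2 c p = (s1 c (fst p), s2 c (snd p))"

definition bowtie_mult ::
  "('k \<Rightarrow> 'a \<Rightarrow> 'a) \<Rightarrow> ('a \<Rightarrow> 'a \<Rightarrow> 'a) \<Rightarrow> ('a \<Rightarrow> 'k) \<Rightarrow>
   ('k \<Rightarrow> 'b \<Rightarrow> 'b) \<Rightarrow> ('b \<Rightarrow> 'b \<Rightarrow> 'b) \<Rightarrow> ('b \<Rightarrow> 'k) \<Rightarrow>
   'a \<times> 'b \<Rightarrow> 'a \<times> 'b \<Rightarrow> 'a::ab_group_add \<times> 'b::ab_group_add" where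
  "bowtie_mult s1 m1 w1 s2 m2 w2 p q =
     (m1 (fst p) (fst q) + s1 (w2 (snd q)) (fst p),
      m2 (snd p) (snd q) + s2 (w1 (fst q)) (snd p))"

definition bowtie_weight :: "('a \<Rightarrow> 'k::field) \<Rightarrow> ('b \<Rightarrow> 'k) \<Rightarrow> 'a \<times> 'b \<Rightarrow> 'k" where
  "bowtie_weight w1 w2 p = w1 (fst p) + w2 (snd p)"

text \<open>K^{\<bowtie>\<nu>}: finitely supported families indexed by i < \<nu> (\<nu> = \<infinity> means aleph_0).\<close>
definition Kb_carrier :: "enat \<Rightarrow> (nat \<Rightarrow> 'k::field) set" where
  "Kb_carrier \<nu> = {x. finite {i. x i \<noteq> 0} \<and> (\<forall>i. \<nu> \<le> enat i \<longrightarrow> x i = 0)}"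

definition Kb_weight :: "(nat \<Rightarrow> 'k::field) \<Rightarrow> 'k" where
  "Kb_weight x = (\<Sum>i\<in>{i. x i \<noteq> 0}. x i)"

definition Kb_mult :: "(nat \<Rightarrow> 'k::field) \<Rightarrow> (nat \<Rightarrow> 'k) \<Rightarrow> (nat \<Rightarrow> 'k)" where
  "Kb_mult x y = (\<lambda>i. Kb_weight y * x i)"

definition iso_Kb ::
  "('k::field \<Rightarrow> 'a::ab_group_add \<Rightarrow> 'a) \<Rightarrow> ('a \<Rightarrow> 'a \<Rightarrow> 'a) \<Rightarrow> ('a \<Rightarrow> 'k) \<Rightarrow> enat \<Rightarrow> bool" where
  "iso_Kb s m w \<nu> \<longleftrightarrow>
     (\<exists>f :: 'a \<Rightarrow> nat \<Rightarrow> 'k.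
        bij_betw f UNIV (Kb_carrier \<nu>) \<and>
        (\<forall>x y. f (x + y) = (\<lambda>i. f x i + f y i)) \<and>
        (\<forall>c x. f (s c x) = (\<lambda>i. c * f x i)) \<and>
        (\<forall>x y. f (m x y) = Kb_mult (f x) (f y)) \<and>
        (\<forall>x. Kb_weight (f x) = w x))"

end

theory Submission
  imports Defs
begin


definition Lf :: "(nat \<Rightarrow> 'k::field) \<Rightarrow> nat \<Rightarrow> (nat \<Rightarrow> 'k) \<Rightarrow> 'k" where
  "Lf a k g = (\<Sum>i\<in>{i. g i \<noteq> 0}. g i * (if i = k then a i else a i - 1))"

definition Tf :: "(nat \<Rightarrow> 'k::field) \<Rightarrow> nat \<Rightarrow> (nat \<Rightarrow> 'k) \<Rightarrow> (nat \<Rightarrow> 'k)" where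
  "Tf a k g = g(k := Lf a k g)"

definition Tinv :: "(nat \<Rightarrow> 'k::field) \<Rightarrow> nat \<Rightarrow> (nat \<Rightarrow> 'k) \<Rightarrow> (nat \<Rightarrow> 'k)" where
  "Tinv a k h = h(k := (h k - (\<Sum>i\<in>{i. h i \<noteq> 0} - {k}. h i * (a i - 1))) / a k)"

lemma Lf_sum:
  assumes "finite S" "{i. g i \<noteq> 0} \<subseteq> S"
  shows "Lf a k g = (\<Sum>i\<in>S. g i * (if i = k then a i else a i - 1))"
  unfolding Lf_def using assms by (intro sum.mono_neutral_left) auto

lemma Lf_sum':
  assumes "finite S" "{i. g i \<noteq> 0} \<subseteq> S" "k \<in> S"
  shows "Lf a k g = g k * a k + (\<Sum>i\<in>S - {k}. g i * (a i - 1))"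
proof -
  have "Lf a k g = (\<Sum>i\<in>insert k (S - {k}). g i * (if i = k then a i else a i - 1))"
    using Lf_sum[OF assms(1,2)] assms(3) by (simp add: insert_absorb)
  also have "\<dots> = g k * a k + (\<Sum>i\<in>S - {k}. g i * (if i = k then a i else a i - 1))"
    using assms(1) by (subst sum.insert) auto
  also have "(\<Sum>i\<in>S - {k}. g i * (if i = k then a i else a i - 1)) = (\<Sum>i\<in>S - {k}. g i * (a i - 1))"
    by (intro sum.cong) auto
  finally show ?thesis .
qed

lemma Kb_carrier_finite: "g \<in> Kb_carrier \<nu> \<Longrightarrow> finite {i. g i \<noteq> 0}"
  by (simp add: Kb_carrier_def)

lemma Tf_carrier:
  assumes "g \<in> Kb_carrier \<nu>" "enat k < \<nu>"
  shows "Tf a k g \<in> Kb_carrier \<nu>"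
proof -
  have "{i. Tf a k g i \<noteq> 0} \<subseteq> insert k {i. g i \<noteq> 0}" by (auto simp: Tf_def)
  moreover have "finite (insert k {i. g i \<noteq> 0})" using Kb_carrier_finite[OF assms(1)] by simp
  ultimately have "finite {i. Tf a k g i \<noteq> 0}" by (rule finite_subset)
  moreover have "\<forall>i. \<nu> \<le> enat i \<longrightarrow> Tf a k g i = 0"
  proof (intro allI impI)
    fix i assume i: "\<nu> \<le> enat i"
    then have "i \<noteq> k" using assms(2) by (metis leD)
    moreover have "g i = 0" using assms(1) i by (simp add: Kb_carrier_def)
    ultimately show "Tf a k g i = 0" by (simp add: Tf_def)
  qed
  ultimately show ?thesis by (simp add: Kb_carrier_def)
qed

lemma Tinv_carrier:
  assumes "g \<in> Kb_carrier \<nu>" "enat k < \<nu>"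
  shows "Tinv a k g \<in> Kb_carrier \<nu>"
proof -
  have "{i. Tinv a k g i \<noteq> 0} \<subseteq> insert k {i. g i \<noteq> 0}" by (auto simp: Tinv_def)
  moreover have "finite (insert k {i. g i \<noteq> 0})" using Kb_carrier_finite[OF assms(1)] by simp
  ultimately have "finite {i. Tinv a k g i \<noteq> 0}" by (rule finite_subset)
  moreover have "\<forall>i. \<nu> \<le> enat i \<longrightarrow> Tinv a k g i = 0"
  proof (intro allI impI)
    fix i assume i: "\<nu> \<le> enat i"
    then have "i \<noteq> k" using assms(2) by (metis leD)
    moreover have "g i = 0" using assms(1) i by (simp add: Kb_carrier_def)
    ultimately show "Tinv a k g i = 0" by (simp add: Tinv_def)
  qed
  ultimately show ?thesis by (simp add: Kb_carrier_def)
qed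

lemma Tf_Tinv:
  assumes "g \<in> Kb_carrier \<nu>" "a k \<noteq> 0"
  shows "Tf a k (Tinv a k g) = g"
proof -
  let ?S = "insert k {i. g i \<noteq> 0}"
  have fin: "finite ?S" using Kb_carrier_finite[OF assms(1)] by simp
  have "Lf a k (Tinv a k g) = Tinv a k g k * a k + (\<Sum>i\<in>?S - {k}. Tinv a k g i * (a i - 1))"
    by (rule Lf_sum'[OF fin]) (auto simp: Tinv_def)
  also have "(\<Sum>i\<in>?S - {k}. Tinv a k g i * (a i - 1)) = (\<Sum>i\<in>{i. g i \<noteq> 0} - {k}. g i * (a i - 1))"
    by (intro sum.cong) (auto simp: Tinv_def)
  finally have L0: "Lf a k (Tinv a k g) = Tinv a k g k * a k + (\<Sum>i\<in>{i. g i \<noteq> 0} - {k}. g i * (a i - 1))" .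
  have "Tinv a k g k * a k = g k - (\<Sum>i\<in>{i. g i \<noteq> 0} - {k}. g i * (a i - 1))"
    using assms(2) by (simp add: Tinv_def)
  then have L: "Lf a k (Tinv a k g) = g k" using L0 by simp
  show ?thesis unfolding Tf_def L by (auto simp: Tinv_def)
qed

lemma Tinv_Tf:
  assumes "g \<in> Kb_carrier \<nu>" "a k \<noteq> 0"
  shows "Tinv a k (Tf a k g) = g"
proof -
  let ?S = "insert k {i. g i \<noteq> 0}"
  have fin: "finite ?S" using Kb_carrier_finite[OF assms(1)] by simp
  have L: "Lf a k g = g k * a k + (\<Sum>i\<in>?S - {k}. g i * (a i - 1))"
    by (rule Lf_sum'[OF fin]) auto
  have "(\<Sum>i\<in>{i. Tf a k g i \<noteq> 0} - {k}. Tf a k g i * (a i - 1)) = (\<Sum>i\<in>?S - {k}. g i * (a i - 1))"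
    by (intro sum.mono_neutral_cong) (use fin in \<open>auto simp: Tf_def intro: finite_subset[of _ ?S]\<close>)
  then show ?thesis using assms(2) L
    by (auto simp: Tf_def Tinv_def fun_eq_iff)
qed

lemma Tf_bij:
  assumes "a k \<noteq> 0" "enat k < \<nu>"
  shows "bij_betw (Tf a k) (Kb_carrier \<nu>) (Kb_carrier \<nu>)"
  by (rule bij_betw_byWitness[where f'="Tinv a k"]) (use assms Tf_carrier Tinv_carrier Tf_Tinv Tinv_Tf in auto)

lemma Tf_add:
  assumes "g \<in> Kb_carrier \<nu>" "h \<in> Kb_carrier \<nu>"
  shows "Tf a k (\<lambda>i. g i + h i) = (\<lambda>i. Tf a k g i + Tf a k h i)"
proof -
  let ?S = "{i. g i \<noteq> 0} \<union> {i. h i \<noteq> 0}"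
  have fin: "finite ?S" using Kb_carrier_finite assms by auto
  have "Lf a k (\<lambda>i. g i + h i) = Lf a k g + Lf a k h"
    by (subst (1 2 3) Lf_sum[OF fin]) (auto simp: sum.distrib distrib_right)
  then show ?thesis by (auto simp: Tf_def)
qed

lemma Tf_scale:
  assumes "g \<in> Kb_carrier \<nu>"
  shows "Tf a k (\<lambda>i. c * g i) = (\<lambda>i. c * Tf a k g i)"
proof -
  let ?S = "{i. g i \<noteq> 0}"
  have fin: "finite ?S" using Kb_carrier_finite assms by auto
  have "Lf a k (\<lambda>i. c * g i) = c * Lf a k g"
    by (subst (1 2) Lf_sum[OF fin]) (auto simp: sum_distrib_left mult.assoc)
  then show ?thesis by (auto simp: Tf_def)
qed

lemma Kb_weight_sum:
  assumes "finite S" "{i. g i \<noteq> 0} \<subseteq> S"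
  shows "Kb_weight g = (\<Sum>i\<in>S. g i)"
  unfolding Kb_weight_def using assms by (intro sum.mono_neutral_left) auto

lemma Tf_weight:
  assumes "finite S" "{i. g i \<noteq> 0} \<subseteq> S" "k \<in> S"
  shows "Kb_weight (Tf a k g) = (\<Sum>i\<in>S. g i * a i)"
proof -
  have "Kb_weight (Tf a k g) = (\<Sum>i\<in>insert k (S - {k}). Tf a k g i)"
    using assms by (intro Kb_weight_sum) (auto simp: Tf_def insert_absorb)
  also have "\<dots> = Lf a k g + (\<Sum>i\<in>S - {k}. g i)"
    using assms(1) by (subst sum.insert) (auto simp: Tf_def intro!: sum.cong)
  also have "\<dots> = g k * a k + (\<Sum>i\<in>S - {k}. g i * (a i - 1) + g i)"
    using Lf_sum'[OF assms] by (simp add: sum.distrib)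
  also have "\<dots> = (\<Sum>i\<in>insert k (S - {k}). g i * a i)"
    using assms(1) by (subst sum.insert) (auto simp: algebra_simps)
  finally show ?thesis using assms(3) by (simp add: insert_absorb)
qed




context vector_space begin

lemma coord_iso:
  assumes ind: "\<not> dependent B" and sp: "span B = UNIV"
    and e: "bij_betw e {i. enat i < \<nu>} B"
  defines "f0 \<equiv> \<lambda>x i. if enat i < \<nu> then representation B x (e i) else 0"
  shows "bij_betw f0 UNIV (Kb_carrier \<nu>)"
    and "\<And>x y. f0 (x + y) = (\<lambda>i. f0 x i + f0 y i)"
    and "\<And>c x. f0 (c *s x) = (\<lambda>i. c * f0 x i)"
    and "\<And>x. x = (\<Sum>i\<in>{i. f0 x i \<noteq> 0}. f0 x i *s e i)"
proof -
  let ?I = "{i. enat i < \<nu>}"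
  have inj: "inj_on e ?I" and img: "e ` ?I = B" using e by (auto simp: bij_betw_def)
  have insp: "x \<in> span B" for x using sp by auto
  have carr: "f0 x \<in> Kb_carrier \<nu>" for x
  proof -
    have "{i. f0 x i \<noteq> 0} \<subseteq> e -` {b. representation B x b \<noteq> 0} \<inter> ?I"
      by (auto simp: f0_def split: if_splits)
    moreover have "finite (e -` {b. representation B x b \<noteq> 0} \<inter> ?I)"
      by (intro finite_vimage_IntI finite_representation inj)
    ultimately have "finite {i. f0 x i \<noteq> 0}" by (rule finite_subset)
    moreover have "f0 x i = 0" if "\<nu> \<le> enat i" for i using leD[OF that] by (simp add: f0_def)
    ultimately show ?thesis by (simp add: Kb_carrier_def)
  qed
  show add: "f0 (x + y) = (\<lambda>i. f0 x i + f0 y i)" for x y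
    by (auto simp: f0_def representation_add[OF ind insp insp])
  show scl: "f0 (c *s x) = (\<lambda>i. c * f0 x i)" for c x
    by (auto simp: f0_def representation_scale[OF ind insp])
  have surj: "f0 (\<Sum>i\<in>{i. g i \<noteq> 0}. g i *s e i) = g" if g: "g \<in> Kb_carrier \<nu>" for g
  proof
    fix j
    let ?S = "{i. g i \<noteq> 0}"
    have SI: "?S \<subseteq> ?I"
    proof
      fix i assume "i \<in> ?S"
      then have "\<not> \<nu> \<le> enat i" using g by (auto simp: Kb_carrier_def)
      then show "i \<in> ?I" by simp
    qed
    have eB: "e i \<in> B" if "i \<in> ?S" for i using SI that img by auto
    have R: "representation B (\<Sum>i\<in>?S. g i *s e i) b = (\<Sum>i\<in>?S. g i * (if b = e i then 1 else 0))" for b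
      by (subst representation_sum[OF ind]) (auto simp: insp representation_scale[OF ind] representation_basis[OF ind eB])
    show "f0 (\<Sum>i\<in>?S. g i *s e i) j = g j"
    proof (cases "j \<in> ?I")
      case True
      have "(\<Sum>i\<in>?S. g i * (if e j = e i then 1 else 0)) = (\<Sum>i\<in>?S. if j = i then g i else 0)"
        by (intro sum.cong refl) (use inj SI True in \<open>auto simp: inj_on_def\<close>)
      also have "\<dots> = g j" using g by (auto simp: Kb_carrier_def sum.delta sum.delta')
      finally show ?thesis using True by (simp add: f0_def R)
    next
      case False
      then show ?thesis using g by (auto simp: f0_def Kb_carrier_def not_less)
    qed
  qed
  have injf: "x = y" if eq: "f0 x = f0 y" for x y
  proof -
    have "representation B x b = representation B y b" for b
    proof (cases "b \<in> B")
      case True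
      then obtain i where "i \<in> ?I" "b = e i" using img by auto
      then show ?thesis using fun_cong[OF eq, of i] by (simp add: f0_def)
    next
      case False
      have "representation B x b = 0" by (rule ccontr) (use representation_ne_zero False in blast)
      moreover have "representation B y b = 0" by (rule ccontr) (use representation_ne_zero False in blast)
      ultimately show ?thesis by simp
    qed
    then have "representation B x = representation B y" by auto
    then have "(\<Sum>b | representation B x b \<noteq> 0. representation B x b *s b) = (\<Sum>b | representation B y b \<noteq> 0. representation B y b *s b)"
      by (rule arg_cong)
    then show ?thesis unfolding sum_nonzero_representation_eq[OF ind insp] .
  qed
  show "bij_betw f0 UNIV (Kb_carrier \<nu>)"
    unfolding bij_betw_def
  proof
    show "inj_on f0 UNIV" by (auto intro: inj_onI injf)
    show "range f0 = Kb_carrier \<nu>"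
    proof
      show "range f0 \<subseteq> Kb_carrier \<nu>" using carr by blast
      show "Kb_carrier \<nu> \<subseteq> range f0"
      proof
        fix g :: "nat \<Rightarrow> 'a" assume "g \<in> Kb_carrier \<nu>"
        then have "g = f0 (\<Sum>i\<in>{i. g i \<noteq> 0}. g i *s e i)" by (rule surj[symmetric])
        then show "g \<in> range f0" by blast
      qed
    qed
  qed
  show "x = (\<Sum>i\<in>{i. f0 x i \<noteq> 0}. f0 x i *s e i)" for x
    by (rule injf) (rule surj[OF carr, symmetric])
qed

end




lemma main_iso:
  fixes s :: "'k::field \<Rightarrow> 'a::ab_group_add \<Rightarrow> 'a"
  assumes vs: "vector_space s" and lin: "Vector_Spaces.linear s (*) w" and wnz: "w \<noteq> (\<lambda>_. 0)"
    and mult: "\<And>x y. m x y = s (w y) x"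
    and dim: "has_dim s \<nu>"
  shows "iso_Kb s m w \<nu>"
proof -
  interpret vector_space s by fact
  interpret lw: Vector_Spaces.linear s "(*)" w by fact
  from dim obtain B where ind: "\<not> dependent B" and sp: "span B = UNIV" and
    sz: "(finite B \<and> \<nu> = enat (card B)) \<or> (infinite B \<and> countable B \<and> \<nu> = \<infinity>)"
    unfolding has_dim_def by blast
  obtain e where e: "bij_betw e {i. enat i < \<nu>} B"
  proof (cases "finite B")
    case True
    then have nu: "\<nu> = enat (card B)" using sz by auto
    obtain h where "bij_betw h {0..<card B} B" using ex_bij_betw_nat_finite[OF True] by blast
    moreover have "{i. enat i < \<nu>} = {0..<card B}" using nu by auto
    ultimately show ?thesis using that by auto
  next
    case False
    then have nu: "\<nu> = \<infinity>" and c: "countable B" using sz by auto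
    have "bij_betw (from_nat_into B) UNIV B" using bij_betw_from_nat_into[OF c False] .
    moreover have "{i. enat i < \<nu>} = UNIV" using nu by auto
    ultimately show ?thesis using that by auto
  qed
  define f0 where "f0 = (\<lambda>x i. if enat i < \<nu> then representation B x (e i) else 0)"
  have bij0: "bij_betw f0 UNIV (Kb_carrier \<nu>)"
    and add0: "\<And>x y. f0 (x + y) = (\<lambda>i. f0 x i + f0 y i)"
    and scl0: "\<And>c x. f0 (s c x) = (\<lambda>i. c * f0 x i)"
    and rec0: "\<And>x. x = (\<Sum>i\<in>{i. f0 x i \<noteq> 0}. s (f0 x i) (e i))"
    using coord_iso[OF ind sp e] unfolding f0_def by blast+
  have carr: "f0 x \<in> Kb_carrier \<nu>" for x using bij0 by (auto simp: bij_betw_def)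
  have wx: "w x = (\<Sum>i\<in>S. f0 x i * w (e i))" if "finite S" "{i. f0 x i \<noteq> 0} \<subseteq> S" for x S
  proof -
    have "w x = w (\<Sum>i\<in>{i. f0 x i \<noteq> 0}. s (f0 x i) (e i))" using rec0[of x] by simp
    also have "\<dots> = (\<Sum>i\<in>{i. f0 x i \<noteq> 0}. f0 x i * w (e i))" by (simp add: lw.sum lw.scale)
    also have "\<dots> = (\<Sum>i\<in>S. f0 x i * w (e i))" using that by (intro sum.mono_neutral_left) auto
    finally show ?thesis .
  qed
  obtain k where k: "enat k < \<nu>" "w (e k) \<noteq> 0"
  proof (rule ccontr)
    note k_that = that
    assume "\<not> thesis"
    then have z: "w (e i) = 0" if "enat i < \<nu>" for i using that \<open>\<not> thesis\<close> k_that by blast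
    have "w x = 0" for x
    proof -
      have "w x = (\<Sum>i\<in>{i. f0 x i \<noteq> 0}. f0 x i * w (e i))"
        using carr[of x] by (intro wx) (auto simp: Kb_carrier_def)
      also have "\<dots> = 0" by (intro sum.neutral) (auto simp: z f0_def)
      finally show ?thesis .
    qed
    then show False using wnz by auto
  qed
  define a where "a = (\<lambda>i. w (e i))"
  have ak: "a k \<noteq> 0" using k by (simp add: a_def)
  define f where "f = (\<lambda>x. Tf a k (f0 x))"
  have wt: "Kb_weight (f x) = w x" for x
  proof -
    let ?S = "insert k {i. f0 x i \<noteq> 0}"
    have fin: "finite ?S" using carr[of x] by (simp add: Kb_carrier_def)
    have "Kb_weight (f x) = (\<Sum>i\<in>?S. f0 x i * a i)"
      unfolding f_def by (rule Tf_weight[OF fin]) auto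
    also have "\<dots> = w x" unfolding a_def by (rule wx[symmetric, OF fin]) auto
    finally show ?thesis .
  qed
  have fadd: "f (x + y) = (\<lambda>i. f x i + f y i)" for x y
    unfolding f_def add0 by (rule Tf_add[OF carr carr])
  have fscl: "f (s c x) = (\<lambda>i. c * f x i)" for c x
    unfolding f_def scl0 by (rule Tf_scale[OF carr])
  show ?thesis
    unfolding iso_Kb_def
  proof (intro exI[of _ f] conjI allI)
    show "bij_betw f UNIV (Kb_carrier \<nu>)"
      unfolding f_def using bij_betw_trans[OF bij0 Tf_bij[of a k \<nu>, OF ak k(1)]] by (simp add: comp_def)
    show "f (x + y) = (\<lambda>i. f x i + f y i)" for x y by (rule fadd)
    show "f (s c x) = (\<lambda>i. c * f x i)" for c x by (rule fscl)
    show "f (m x y) = Kb_mult (f x) (f y)" for x y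
      by (simp add: mult fscl Kb_mult_def wt)
    show "Kb_weight (f x) = w x" for x by (rule wt)
  qed
qed




lemma baric_facts:
  assumes "baric_algebra s m w"
  shows "vector_space s" "Vector_Spaces.linear s (*) w" "w \<noteq> (\<lambda>_. 0)"
    and "m x 0 = 0" "m 0 y = 0" "m (s c x) y = s c (m x y)" "m x (s c y) = s c (m x y)"
    and "w 0 = 0" "w (s c x) = c * w x" "w (x + y) = w x + w y"
    and "s c 0 = 0" "s 0 x = 0" "s a (s b x) = s (a * b) x" "s 1 x = x"
    and "s c (x + y) = s c x + s c y" "s (a + b) x = s a x + s b x"
    and "w (m x y) = w x * w y"
proof -
  have vs: "vector_space s" and l1: "Vector_Spaces.linear s s (m x)" and l2: "Vector_Spaces.linear s s (\<lambda>x. m x y)"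
    and lw: "Vector_Spaces.linear s (*) w" and wm: "w (m x y) = w x * w y" and nz: "w \<noteq> (\<lambda>_. 0)"
    using assms unfolding baric_algebra_def by auto
  interpret vector_space s by (rule vs)
  interpret l1: Vector_Spaces.linear s s "m x" by (rule l1)
  interpret l2: Vector_Spaces.linear s s "\<lambda>x. m x y" by (rule l2)
  interpret lw: Vector_Spaces.linear s "(*)" w by (rule lw)
  show "vector_space s" "Vector_Spaces.linear s (*) w" "w \<noteq> (\<lambda>_. 0)" "w (m x y) = w x * w y"
    by (fact vs lw nz wm)+
  show "m x 0 = 0" "m 0 y = 0" "m (s c x) y = s c (m x y)" "m x (s c y) = s c (m x y)"
    using l1.zero l2.zero l1.scale l2.scale by auto
  show "w 0 = 0" "w (s c x) = c * w x" "w (x + y) = w x + w y"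
    using lw.zero lw.scale lw.add by auto
  show "s c 0 = 0" "s 0 x = 0" "s a (s b x) = s (a * b) x" "s 1 x = x"
    "s c (x + y) = s c x + s c y" "s (a + b) x = s a x + s b x"
    by (auto simp: scale_right_distrib scale_left_distrib)
qed

lemma exists_unit:
  assumes "baric_algebra s m w"
  obtains u where "w u = 1"
proof -
  obtain x where "w x \<noteq> 0" using baric_facts(3)[OF assms] by auto
  then have "w (s (1 / w x) x) = 1" using baric_facts(9)[OF assms] by simp
  then show ?thesis using that by blast
qed

lemma assoc_imp_mult1:
  assumes b1: "baric_algebra s1 m1 w1" and b2: "baric_algebra s2 m2 w2"
    and as: "associative (bowtie_mult s1 m1 w1 s2 m2 w2)"
  shows "m1 x y = s1 (w1 y) x"
proof -
  note f1 = baric_facts[OF b1] and f2 = baric_facts[OF b2]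
  obtain c where c: "w2 c = 1" using exists_unit[OF b2] by blast
  let ?M = "bowtie_mult s1 m1 w1 s2 m2 w2"
  have "?M (?M (x, 0) (0, c)) (y, 0) = ?M (x, 0) (?M (0, c) (y, 0))"
    using as unfolding associative_def by blast
  then have "fst (?M (?M (x, 0) (0, c)) (y, 0)) = fst (?M (x, 0) (?M (0, c) (y, 0)))" by simp
  then show ?thesis using c by (simp add: bowtie_mult_def f1 f2)
qed

lemma assoc_imp_mult2:
  assumes b1: "baric_algebra s1 m1 w1" and b2: "baric_algebra s2 m2 w2"
    and as: "associative (bowtie_mult s1 m1 w1 s2 m2 w2)"
  shows "m2 x y = s2 (w2 y) x"
proof -
  note f1 = baric_facts[OF b1] and f2 = baric_facts[OF b2]
  obtain c where c: "w1 c = 1" using exists_unit[OF b1] by blast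
  let ?M = "bowtie_mult s1 m1 w1 s2 m2 w2"
  have "?M (?M (0, x) (c, 0)) (0, y) = ?M (0, x) (?M (c, 0) (0, y))"
    using as unfolding associative_def by blast
  then have "snd (?M (?M (0, x) (c, 0)) (0, y)) = snd (?M (0, x) (?M (c, 0) (0, y)))" by simp
  then show ?thesis using c by (simp add: bowtie_mult_def f1 f2 mult.commute)
qed

lemma iso_imp_mult:
  assumes "iso_Kb s m w \<nu>"
  shows "m x y = s (w y) x"
proof -
  obtain f :: "_ \<Rightarrow> nat \<Rightarrow> _" where bij: "bij_betw f UNIV (Kb_carrier \<nu>)"
    and sc: "\<forall>c x. f (s c x) = (\<lambda>i. c * f x i)"
    and mu: "\<forall>x y. f (m x y) = Kb_mult (f x) (f y)"
    and wt: "\<forall>x. Kb_weight (f x) = w x"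
    using assms unfolding iso_Kb_def by blast
  have "f (m x y) = f (s (w y) x)" using sc mu wt by (simp add: Kb_mult_def)
  moreover have "inj f" using bij by (simp add: bij_betw_def)
  ultimately show ?thesis by (meson UNIV_I inj_onD)
qed

lemma bowtie_mult_eq:
  assumes b1: "baric_algebra s1 m1 w1" and b2: "baric_algebra s2 m2 w2"
    and m1: "\<And>x y. m1 x y = s1 (w1 y) x" and m2: "\<And>x y. m2 x y = s2 (w2 y) x"
  shows "bowtie_mult s1 m1 w1 s2 m2 w2 p q = bowtie_scale s1 s2 (bowtie_weight w1 w2 q) p"
  using baric_facts(16)[OF b1] baric_facts(16)[OF b2]
  by (simp add: bowtie_mult_def bowtie_scale_def bowtie_weight_def m1 m2 add.commute)

lemma mult_imp_assoc:
  assumes b1: "baric_algebra s1 m1 w1" and b2: "baric_algebra s2 m2 w2"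
    and m1: "\<And>x y. m1 x y = s1 (w1 y) x" and m2: "\<And>x y. m2 x y = s2 (w2 y) x"
  shows "associative (bowtie_mult s1 m1 w1 s2 m2 w2)"
  unfolding associative_def bowtie_mult_eq[OF assms]
  using baric_facts[OF b1] baric_facts[OF b2]
  by (simp add: bowtie_scale_def bowtie_weight_def algebra_simps)




lemma bowtie_vs:
  assumes "vector_space s1" "vector_space s2"
  shows "vector_space (bowtie_scale s1 s2)"
proof -
  interpret V1: vector_space s1 by fact
  interpret V2: vector_space s2 by fact
  show ?thesis
    by unfold_locales (auto simp: bowtie_scale_def V1.scale_right_distrib V1.scale_left_distrib
        V2.scale_right_distrib V2.scale_left_distrib)
qed

lemma bowtie_weight_linear:
  assumes "Vector_Spaces.linear s1 (*) w1" "Vector_Spaces.linear s2 (*) w2"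
  shows "Vector_Spaces.linear (bowtie_scale s1 s2) (*) (bowtie_weight w1 w2)"
proof -
  have a: "vector_space s1" "vector_space ((*) :: 'a \<Rightarrow> 'a \<Rightarrow> 'a)" "\<forall>x y. w1 (x + y) = w1 x + w1 y"
    "\<forall>c x. w1 (s1 c x) = c * w1 x"
    using assms(1) unfolding Vector_Spaces.linear_iff by auto
  have b: "vector_space s2" "\<forall>x y. w2 (x + y) = w2 x + w2 y" "\<forall>c x. w2 (s2 c x) = c * w2 x"
    using assms(2) unfolding Vector_Spaces.linear_iff by auto
  show ?thesis unfolding Vector_Spaces.linear_iff
    using a b bowtie_vs[OF a(1) b(1)]
    by (auto simp: bowtie_weight_def bowtie_scale_def algebra_simps)
qed

lemma bowtie_has_dim:
  fixes s1 :: "'k::field \<Rightarrow> 'a::ab_group_add \<Rightarrow> 'a" and s2 :: "'k \<Rightarrow> 'b::ab_group_add \<Rightarrow> 'b"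
  assumes vs1: "vector_space s1" and vs2: "vector_space s2"
    and d1: "has_dim s1 \<nu>1" and d2: "has_dim s2 \<nu>2"
  shows "has_dim (bowtie_scale s1 s2) (\<nu>1 + \<nu>2)"
proof -
  interpret V1: vector_space s1 by fact
  interpret V2: vector_space s2 by fact
  have vsP: "vector_space (bowtie_scale s1 s2)" using bowtie_vs[OF vs1 vs2] .
  interpret P: vector_space "bowtie_scale s1 s2" by fact
  from d1 obtain B1 where ind1: "\<not> V1.dependent B1" and sp1: "V1.span B1 = UNIV" and
    sz1: "(finite B1 \<and> \<nu>1 = enat (card B1)) \<or> (infinite B1 \<and> countable B1 \<and> \<nu>1 = \<infinity>)"
    unfolding has_dim_def by blast
  from d2 obtain B2 where ind2: "\<not> V2.dependent B2" and sp2: "V2.span B2 = UNIV" and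
    sz2: "(finite B2 \<and> \<nu>2 = enat (card B2)) \<or> (infinite B2 \<and> countable B2 \<and> \<nu>2 = \<infinity>)"
    unfolding has_dim_def by blast
  define i1 where "i1 = (\<lambda>x::'a. (x, 0::'b))"
  define i2 where "i2 = (\<lambda>y::'b. (0::'a, y))"
  define B where "B = i1 ` B1 \<union> i2 ` B2"
  have h1: "module_hom s1 (bowtie_scale s1 s2) i1"
    unfolding module_hom_iff_linear Vector_Spaces.linear_iff using vs1 vsP
    by (auto simp: i1_def bowtie_scale_def)
  have h2: "module_hom s2 (bowtie_scale s1 s2) i2"
    unfolding module_hom_iff_linear Vector_Spaces.linear_iff using vs2 vsP
    by (auto simp: i2_def bowtie_scale_def)
  have hf: "module_hom (bowtie_scale s1 s2) s1 fst"
    unfolding module_hom_iff_linear Vector_Spaces.linear_iff using vs1 vsP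
    by (auto simp: bowtie_scale_def)
  have hs: "module_hom (bowtie_scale s1 s2) s2 snd"
    unfolding module_hom_iff_linear Vector_Spaces.linear_iff using vs2 vsP
    by (auto simp: bowtie_scale_def)
  have z1: "0 \<notin> B1" using ind1 V1.dependent_zero by blast
  have z2: "0 \<notin> B2" using ind2 V2.dependent_zero by blast
  have span0_1: "V1.span (insert 0 X) = V1.span X" for X
    by (auto simp: V1.span_breakdown_eq)
  have span0_2: "V2.span (insert 0 X) = V2.span X" for X
    by (auto simp: V2.span_breakdown_eq)
  have spB: "P.span B = UNIV"
  proof -
    have "P.span (i1 ` B1) = range i1" using module_hom.span_image[OF h1, of B1] sp1 by simp
    moreover have "P.span (i2 ` B2) = range i2" using module_hom.span_image[OF h2, of B2] sp2 by simp
    ultimately have "range i1 \<subseteq> P.span B" "range i2 \<subseteq> P.span B"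
      unfolding B_def by (metis P.span_mono Un_upper1 Un_upper2)+
    then have "i1 x + i2 y \<in> P.span B" for x y by (intro P.span_add) auto
    moreover have "(x, y) = i1 x + i2 y" for x y by (simp add: i1_def i2_def)
    ultimately show ?thesis by (metis UNIV_eq_I surj_pair)
  qed
  have indB: "\<not> P.dependent B"
  proof
    assume "P.dependent B"
    then obtain a where aB: "a \<in> B" and asp: "a \<in> P.span (B - {a})" unfolding P.dependent_def by blast
    from aB show False unfolding B_def
    proof
      assume "a \<in> i1 ` B1"
      then obtain b where b: "b \<in> B1" "a = i1 b" by blast
      have "b \<in> fst ` P.span (B - {a})" using asp b by (force simp: i1_def)
      also have "\<dots> = V1.span (fst ` (B - {a}))" using module_hom.span_image[OF hf] by simp
      also have "\<dots> \<subseteq> V1.span (insert 0 (B1 - {b}))"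
        by (intro V1.span_mono) (auto simp: B_def b i1_def i2_def)
      finally have "b \<in> V1.span (B1 - {b})" unfolding span0_1 .
      then show False using ind1 b(1) unfolding V1.dependent_def by blast
    next
      assume "a \<in> i2 ` B2"
      then obtain b where b: "b \<in> B2" "a = i2 b" by blast
      have "b \<in> snd ` P.span (B - {a})" using asp b by (force simp: i2_def)
      also have "\<dots> = V2.span (snd ` (B - {a}))" using module_hom.span_image[OF hs] by simp
      also have "\<dots> \<subseteq> V2.span (insert 0 (B2 - {b}))"
        by (intro V2.span_mono) (auto simp: B_def b i1_def i2_def)
      finally have "b \<in> V2.span (B2 - {b})" unfolding span0_2 .
      then show False using ind2 b(1) unfolding V2.dependent_def by blast
    qed
  qed
  have inj1: "inj i1" and inj2: "inj i2" by (auto simp: inj_def i1_def i2_def)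
  have disj: "i1 ` B1 \<inter> i2 ` B2 = {}" using z1 by (auto simp: i1_def i2_def)
  have szB: "(finite B \<and> \<nu>1 + \<nu>2 = enat (card B)) \<or> (infinite B \<and> countable B \<and> \<nu>1 + \<nu>2 = \<infinity>)"
  proof (cases "finite B1 \<and> finite B2")
    case True
    then have "card B = card B1 + card B2" unfolding B_def
      using card_Un_disjoint[OF _ _ disj] card_image[OF inj_on_subset[OF inj1 subset_UNIV]] card_image[OF inj_on_subset[OF inj2 subset_UNIV]]
      by simp
    then show ?thesis using True sz1 sz2 by (auto simp: B_def)
  next
    case False
    then have inf: "infinite B" unfolding B_def using finite_imageD[OF _ inj_on_subset[OF inj1 subset_UNIV]]
      finite_imageD[OF _ inj_on_subset[OF inj2 subset_UNIV]] by blast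
    have "countable B1" "countable B2" using sz1 sz2 by (auto intro: countable_finite)
    then have "countable B" by (simp add: B_def)
    moreover have "\<nu>1 + \<nu>2 = \<infinity>" using False sz1 sz2 by auto
    ultimately show ?thesis using inf by blast
  qed
  show ?thesis unfolding has_dim_def using indB spB szB by blast
qed




theorem corollary6p1:
  fixes s1 :: "'k::field_char_0 \<Rightarrow> 'a::ab_group_add \<Rightarrow> 'a"
    and m1 :: "'a \<Rightarrow> 'a \<Rightarrow> 'a" and w1 :: "'a \<Rightarrow> 'k"
    and s2 :: "'k \<Rightarrow> 'b::ab_group_add \<Rightarrow> 'b"
    and m2 :: "'b \<Rightarrow> 'b \<Rightarrow> 'b" and w2 :: "'b \<Rightarrow> 'k"
    and \<nu>1 \<nu>2 :: enat
  assumes "baric_algebra s1 m1 w1" and "baric_algebra s2 m2 w2"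
    and "countable_dim s1" and "countable_dim s2"
    and "has_dim s1 \<nu>1" and "has_dim s2 \<nu>2"
  shows "(associative (bowtie_mult s1 m1 w1 s2 m2 w2) \<longleftrightarrow>
            iso_Kb s1 m1 w1 \<nu>1 \<and> iso_Kb s2 m2 w2 \<nu>2)
       \<and> (associative (bowtie_mult s1 m1 w1 s2 m2 w2) \<longrightarrow>
            iso_Kb (bowtie_scale s1 s2) (bowtie_mult s1 m1 w1 s2 m2 w2)
                   (bowtie_weight w1 w2) (\<nu>1 + \<nu>2))"
proof -
  note b1 = assms(1) and b2 = assms(2)
  note f1 = baric_facts[OF b1] and f2 = baric_facts[OF b2]
  have fwd: "iso_Kb s1 m1 w1 \<nu>1 \<and> iso_Kb s2 m2 w2 \<nu>2"
    if as: "associative (bowtie_mult s1 m1 w1 s2 m2 w2)"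
  proof
    show "iso_Kb s1 m1 w1 \<nu>1"
      by (rule main_iso[OF f1(1) f1(2) f1(3) assoc_imp_mult1[OF b1 b2 as] assms(5)])
    show "iso_Kb s2 m2 w2 \<nu>2"
      by (rule main_iso[OF f2(1) f2(2) f2(3) assoc_imp_mult2[OF b1 b2 as] assms(6)])
  qed
  have bwd: "associative (bowtie_mult s1 m1 w1 s2 m2 w2)"
    if "iso_Kb s1 m1 w1 \<nu>1" "iso_Kb s2 m2 w2 \<nu>2"
    by (rule mult_imp_assoc[OF b1 b2 iso_imp_mult[OF that(1)] iso_imp_mult[OF that(2)]])
  have nzP: "bowtie_weight w1 w2 \<noteq> (\<lambda>_. 0)"
  proof
    assume z: "bowtie_weight w1 w2 = (\<lambda>_. 0)"
    obtain u where "w1 u = 1" using exists_unit[OF b1] by blast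
    then have "bowtie_weight w1 w2 (u, 0) = 1" by (simp add: bowtie_weight_def f2)
    then show False using z by simp
  qed
  have prod: "iso_Kb (bowtie_scale s1 s2) (bowtie_mult s1 m1 w1 s2 m2 w2) (bowtie_weight w1 w2) (\<nu>1 + \<nu>2)"
    if as: "associative (bowtie_mult s1 m1 w1 s2 m2 w2)"
    by (rule main_iso[OF bowtie_vs[OF f1(1) f2(1)] bowtie_weight_linear[OF f1(2) f2(2)] nzP
          bowtie_mult_eq[OF b1 b2 assoc_imp_mult1[OF b1 b2 as] assoc_imp_mult2[OF b1 b2 as]]
          bowtie_has_dim[OF f1(1) f2(1) assms(5) assms(6)]])
  show ?thesis using fwd bwd prod by blast
qed


end
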